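(* Let $G$ be a finite group, $\alpha\colon G^3\to\mathrm{U}(1)$ a normalized 3-cocycle, $\mathcal{G}=\mathcal{G}(G,\mathrm{U}(1),\alpha)$, and $\Sigma$ a connected closed oriented surface of genus $\geq1$. Fix a homomorphism $\tilde\rho\colon\pi_1\Sigma\to G$ and let $(\tilde\rho,\tilde\gamma)$ and $(\tilde\rho,\tilde\gamma')$ be two weak representations $\pi_1\Sigma\to\mathcal{G}$ lifting $\tilde\rho$. Then the corresponding flat $\mathcal{G}$-bundles are isomorphic over the identity of the underlying $G$-bundle (i.e. there is a 1-isomorphism between the weak representations whose underlying element of $G$ is $1$) if and only if $\langle\Psi_\Sigma,\tilde\gamma\rangle=\langle\Psi_\Sigma,\tilde\gamma'\rangle$ in $\mathrm{U}(1)$, where $\Psi_\Sigma$ is a cycle representing the fundamental class in $H_2(\pi_1\Sigma;\mathbb{Z})$.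
   Context: $\mathcal{G}(G,\mathrm{U}(1),\alpha)$ is the monoidal groupoid with objects $G$, automorphisms of each object $\mathrm{U}(1)$ (no other morphisms), $g\otimes h=gh$, associator given by $\alpha$. A weak representation (monoidal functor) $\pi_1\Sigma\to\mathcal{G}$ lifting $\tilde\rho$ is a normalized 2-cochain $\tilde\gamma\colon(\pi_1\Sigma)^2\to\mathrm{U}(1)$ with $d\tilde\gamma=\tilde\rho^*\alpha$, where $(d\tilde\gamma)(a,b,c)=\tilde\gamma(b,c)\tilde\gamma(ab,c)^{-1}\tilde\gamma(a,bc)\tilde\gamma(a,b)^{-1}$ and $\tilde\rho^*\alpha(a,b,c)=\alpha(\tilde\rho a,\tilde\rho b,\tilde\rho c)$. A 1-isomorphism $(\tilde\rho,\tilde\gamma)\to(\tilde\rho',\tilde\gamma')$ is a monoidal natural isomorphism, given by $\tilde h\in G$ with $\tilde h\tilde\rho\tilde h^{-1}=\tilde\rho'$ and $\tilde\eta\colon\pi_1\Sigma\to\mathrm{U}(1)$ satisfying the monoidality condition. The pairing $\langle\Psi_\Sigma,\tilde\gamma\rangle$ is the group-(co)homology pairing, well defined since $d\tilde\gamma$ pulls back from $G$ and is the same for both lifts; for genus 1 with $\pi_1\Sigma=\mathbb{Z}^2=\langle e_1,e_2\rangle$ and $\Psi_\Sigma=e_1\otimes e_2-e_2\otimes e_1$ it equals $\tilde\gamma(e_1,e_2)/\tilde\gamma(e_2,e_1)$. *)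

theory Defs
  imports "HOL-Algebra.Group" Complex_Main
begin

text \<open>Letters: (i, False) is the generator x_i, (i, True) its inverse.
  Generators x_(2i) = a_i, x_(2i+1) = b_i for i < g.\<close>

type_synonym letter = "nat \<times> bool"

definition words :: "nat \<Rightarrow> letter list set" where
  "words g = {w. \<forall>x\<in>set w. fst x < 2 * g}"

fun inv_letter :: "letter \<Rightarrow> letter" where
  "inv_letter (i, b) = (i, \<not> b)"

definition surf_relator :: "nat \<Rightarrow> letter list" where
  "surf_relator g =
     concat (map (\<lambda>i. [(2*i, False), (2*i+1, False), (2*i, True), (2*i+1, True)]) [0..<g])"

inductive_set surf_step :: "nat \<Rightarrow> (letter list \<times> letter list) set" for g where
  cancel: "u \<in> words g \<Longrightarrow> v \<in> words g \<Longrightarrow> fst x < 2 * g \<Longrightarrow>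
           (u @ [x, inv_letter x] @ v, u @ v) \<in> surf_step g"
| relator: "u \<in> words g \<Longrightarrow> v \<in> words g \<Longrightarrow>
           (u @ surf_relator g @ v, u @ v) \<in> surf_step g"

definition surf_rel :: "nat \<Rightarrow> (letter list \<times> letter list) set" where
  "surf_rel g = (surf_step g \<union> (surf_step g)\<inverse>)\<^sup>* \<inter> (words g \<times> words g)"

definition surface_group :: "nat \<Rightarrow> letter list set monoid" where
  "surface_group g =
     \<lparr> carrier = words g // surf_rel g,
       mult = (\<lambda>X Y. \<Union>x\<in>X. \<Union>y\<in>Y. surf_rel g `` {x @ y}),
       one = surf_rel g `` {[]} \<rparr>"

definition surf_class :: "nat \<Rightarrow> letter list \<Rightarrow> letter list set" where
  "surf_class g w = surf_rel g `` {w}"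

definition normalized_3cocycle ::
  "('g, 'b) monoid_scheme \<Rightarrow> ('g \<Rightarrow> 'g \<Rightarrow> 'g \<Rightarrow> complex) \<Rightarrow> bool" where
  "normalized_3cocycle G \<alpha> \<longleftrightarrow>
     (\<forall>a\<in>carrier G. \<forall>b\<in>carrier G. \<forall>c\<in>carrier G. cmod (\<alpha> a b c) = 1) \<and>
     (\<forall>a\<in>carrier G. \<forall>b\<in>carrier G. \<forall>c\<in>carrier G.
        (a = \<one>\<^bsub>G\<^esub> \<or> b = \<one>\<^bsub>G\<^esub> \<or> c = \<one>\<^bsub>G\<^esub>) \<longrightarrow> \<alpha> a b c = 1) \<and>
     (\<forall>a\<in>carrier G. \<forall>b\<in>carrier G. \<forall>c\<in>carrier G. \<forall>d\<in>carrier G.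
        \<alpha> b c d * \<alpha> a (b \<otimes>\<^bsub>G\<^esub> c) d * \<alpha> a b c
        = \<alpha> (a \<otimes>\<^bsub>G\<^esub> b) c d * \<alpha> a b (c \<otimes>\<^bsub>G\<^esub> d))"

text \<open>A weak representation Gamma -> G(G, U(1), alpha) lifting rho: a normalized
  U(1)-valued 2-cochain gamma with d gamma = rho^* alpha.\<close>
definition weak_rep_lift ::
  "('x, 'c) monoid_scheme \<Rightarrow> ('g, 'b) monoid_scheme \<Rightarrow> ('g \<Rightarrow> 'g \<Rightarrow> 'g \<Rightarrow> complex)
   \<Rightarrow> ('x \<Rightarrow> 'g) \<Rightarrow> ('x \<Rightarrow> 'x \<Rightarrow> complex) \<Rightarrow> bool" where
  "weak_rep_lift \<Gamma> G \<alpha> \<rho> \<gamma> \<longleftrightarrow>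
     (\<forall>a\<in>carrier \<Gamma>. \<forall>b\<in>carrier \<Gamma>. cmod (\<gamma> a b) = 1) \<and>
     (\<forall>a\<in>carrier \<Gamma>. \<gamma> \<one>\<^bsub>\<Gamma>\<^esub> a = 1 \<and> \<gamma> a \<one>\<^bsub>\<Gamma>\<^esub> = 1) \<and>
     (\<forall>a\<in>carrier \<Gamma>. \<forall>b\<in>carrier \<Gamma>. \<forall>c\<in>carrier \<Gamma>.
        \<gamma> b c * inverse (\<gamma> (a \<otimes>\<^bsub>\<Gamma>\<^esub> b) c) * \<gamma> a (b \<otimes>\<^bsub>\<Gamma>\<^esub> c) * inverse (\<gamma> a b)
        = \<alpha> (\<rho> a) (\<rho> b) (\<rho> c))"

text \<open>A 1-isomorphism (monoidal natural isomorphism) (rho, gamma) -> (rho, gamma')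
  whose underlying element h of G is 1: a map eta : Gamma -> U(1) satisfying
  the monoidality condition eta(ab) gamma(a,b) = gamma'(a,b) eta(a) eta(b).\<close>
definition iso_over_identity ::
  "('x, 'c) monoid_scheme \<Rightarrow> ('x \<Rightarrow> 'x \<Rightarrow> complex) \<Rightarrow> ('x \<Rightarrow> 'x \<Rightarrow> complex) \<Rightarrow> bool" where
  "iso_over_identity \<Gamma> \<gamma> \<gamma>' \<longleftrightarrow>
     (\<exists>\<eta> :: 'x \<Rightarrow> complex.
        (\<forall>a\<in>carrier \<Gamma>. cmod (\<eta> a) = 1) \<and>
        (\<forall>a\<in>carrier \<Gamma>. \<forall>b\<in>carrier \<Gamma>.
           \<eta> (a \<otimes>\<^bsub>\<Gamma>\<^esub> b) * \<gamma> a b = \<gamma>' a b * \<eta> a * \<eta> b))"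

text \<open>A 2-chain is a formal integer combination of bar symbols [a|b], given as a list
  of (coefficient, a, b).\<close>
definition chain_pairing :: "(int \<times> 'x \<times> 'x) list \<Rightarrow> ('x \<Rightarrow> 'x \<Rightarrow> complex) \<Rightarrow> complex" where
  "chain_pairing \<Psi> \<gamma> = prod_list (map (\<lambda>(c, a, b). \<gamma> a b powi c) \<Psi>)"

text \<open>Its boundary vanishes and it represents the fundamental class in H_2(pi_1 Sigma; Z).\<close>
definition surface_fundamental_cycle ::
  "nat \<Rightarrow> (int \<times> letter list set \<times> letter list set) list" where
  "surface_fundamental_cycle g =
     (let r = surf_relator g in
       map (\<lambda>k. (1, surf_class g (take k r), surf_class g [r ! k])) [1..<length r]
     @ map (\<lambda>i. (-1, surf_class g [(i, False)], surf_class g [(i, True)])) [0..<2*g])"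

end

theory Submission
  imports Defs
begin

lemma words_append[simp]: "u @ v \<in> words g \<longleftrightarrow> u \<in> words g \<and> v \<in> words g"
  by (auto simp: words_def)

lemma words_Cons[simp]: "x # v \<in> words g \<longleftrightarrow> fst x < 2*g \<and> v \<in> words g"
  by (auto simp: words_def)

lemma words_Nil[simp]: "[] \<in> words g"
  by (auto simp: words_def)

lemma relator_words[simp]: "surf_relator g \<in> words g"
  by (auto simp: words_def surf_relator_def)

lemma inv_letter_fst[simp]: "fst (inv_letter x) = fst x"
  by (cases x) auto

lemma step_words: "(a, b) \<in> surf_step g \<Longrightarrow> a \<in> words g \<and> b \<in> words g"
  by (induction rule: surf_step.induct) auto

lemma step_app_right: "(a, b) \<in> surf_step g \<Longrightarrow> w \<in> words g \<Longrightarrow> (a @ w, b @ w) \<in> surf_step g"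
proof (induction rule: surf_step.induct)
  case (cancel u v x)
  then show ?case using surf_step.cancel[of u g "v @ w" x] by simp
next
  case (relator u v)
  then show ?case using surf_step.relator[of u g "v @ w"] by simp
qed

lemma step_app_left: "(a, b) \<in> surf_step g \<Longrightarrow> w \<in> words g \<Longrightarrow> (w @ a, w @ b) \<in> surf_step g"
proof (induction rule: surf_step.induct)
  case (cancel u v x)
  then show ?case using surf_step.cancel[of "w @ u" g v x] by simp
next
  case (relator u v)
  then show ?case using surf_step.relator[of "w @ u" g v] by simp
qed

abbreviation "SS g \<equiv> surf_step g \<union> (surf_step g)\<inverse>"

lemma star_app_right: "(a, b) \<in> (SS g)\<^sup>* \<Longrightarrow> w \<in> words g \<Longrightarrow> (a @ w, b @ w) \<in> (SS g)\<^sup>*"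
proof (induction rule: rtrancl_induct)
  case base then show ?case by simp
next
  case (step y z)
  then have "(y @ w, z @ w) \<in> SS g" using step_app_right by blast
  then show ?case using step by (meson rtrancl.rtrancl_into_rtrancl)
qed

lemma star_app_left: "(a, b) \<in> (SS g)\<^sup>* \<Longrightarrow> w \<in> words g \<Longrightarrow> (w @ a, w @ b) \<in> (SS g)\<^sup>*"
proof (induction rule: rtrancl_induct)
  case base then show ?case by simp
next
  case (step y z)
  then have "(w @ y, w @ z) \<in> SS g" using step_app_left by blast
  then show ?case using step by (meson rtrancl.rtrancl_into_rtrancl)
qed

lemma equiv_rel: "equiv (words g) (surf_rel g)"
proof (rule equivI)
  show "refl_on (words g) (surf_rel g)"
    by (auto simp: refl_on_def surf_rel_def)
  have "sym ((SS g)\<^sup>*)" by (simp add: sym_Un_converse sym_rtrancl)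
  then show "sym (surf_rel g)" unfolding surf_rel_def sym_def by blast
  show "trans (surf_rel g)" unfolding surf_rel_def trans_def
    by (auto intro: rtrancl_trans)
  show "surf_rel g \<subseteq> words g \<times> words g" by (auto simp: surf_rel_def)
qed

lemma rel_app: "(a, a') \<in> surf_rel g \<Longrightarrow> (b, b') \<in> surf_rel g \<Longrightarrow> (a @ b, a' @ b') \<in> surf_rel g"
proof -
  assume A: "(a, a') \<in> surf_rel g" and B: "(b, b') \<in> surf_rel g"
  then have w: "a \<in> words g" "a' \<in> words g" "b \<in> words g" "b' \<in> words g"
    by (auto simp: surf_rel_def)
  have "(a @ b, a' @ b) \<in> (SS g)\<^sup>*" using A w star_app_right by (auto simp: surf_rel_def)
  moreover have "(a' @ b, a' @ b') \<in> (SS g)\<^sup>*" using B w star_app_left by (auto simp: surf_rel_def)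
  ultimately show ?thesis using w by (auto simp: surf_rel_def)
qed

lemma class_carrier: "w \<in> words g \<Longrightarrow> surf_class g w \<in> carrier (surface_group g)"
  by (simp add: surface_group_def surf_class_def quotientI)

lemma carrier_class: "A \<in> carrier (surface_group g) \<Longrightarrow> \<exists>w\<in>words g. A = surf_class g w"
  by (auto simp: surface_group_def surf_class_def quotient_def)

lemma one_class: "\<one>\<^bsub>surface_group g\<^esub> = surf_class g []"
  by (simp add: surface_group_def surf_class_def)

lemma class_eq_iff: "w \<in> words g \<Longrightarrow> w' \<in> words g \<Longrightarrow>
   surf_class g w = surf_class g w' \<longleftrightarrow> (w, w') \<in> surf_rel g"
  unfolding surf_class_def by (rule eq_equiv_class_iff[OF equiv_rel])

lemma mult_class: "w \<in> words g \<Longrightarrow> v \<in> words g \<Longrightarrow>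
   surf_class g w \<otimes>\<^bsub>surface_group g\<^esub> surf_class g v = surf_class g (w @ v)"
proof -
  assume w: "w \<in> words g" and v: "v \<in> words g"
  have E: "equiv (words g) (surf_rel g)" by (rule equiv_rel)
  have "(\<Union>x\<in>surf_rel g `` {w}. \<Union>y\<in>surf_rel g `` {v}. surf_rel g `` {x @ y}) = surf_rel g `` {w @ v}"
  proof (intro equalityI subsetI)
    fix z assume "z \<in> (\<Union>x\<in>surf_rel g `` {w}. \<Union>y\<in>surf_rel g `` {v}. surf_rel g `` {x @ y})"
    then obtain x y where "(w, x) \<in> surf_rel g" "(v, y) \<in> surf_rel g" "(x @ y, z) \<in> surf_rel g" by auto
    then have "(w @ v, x @ y) \<in> surf_rel g" by (simp add: rel_app)
    then show "z \<in> surf_rel g `` {w @ v}"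
      using \<open>(x @ y, z) \<in> surf_rel g\<close> E by (meson Image_singleton_iff equivE transD)
  next
    fix z assume "z \<in> surf_rel g `` {w @ v}"
    moreover have "w \<in> surf_rel g `` {w}" "v \<in> surf_rel g `` {v}"
      using w v E by (auto simp: equiv_def refl_on_def)
    ultimately show "z \<in> (\<Union>x\<in>surf_rel g `` {w}. \<Union>y\<in>surf_rel g `` {v}. surf_rel g `` {x @ y})"
      by blast
  qed
  then show ?thesis by (simp add: surface_group_def surf_class_def)
qed

lemma step_class: "(a, b) \<in> surf_step g \<Longrightarrow> surf_class g a = surf_class g b"
proof -
  assume s: "(a, b) \<in> surf_step g"
  then have "a \<in> words g" "b \<in> words g" using step_words by auto
  moreover have "(a, b) \<in> surf_rel g" using s step_words by (auto simp: surf_rel_def)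
  ultimately show ?thesis using class_eq_iff by blast
qed

lemma cancel_class: "fst x < 2*g \<Longrightarrow> surf_class g [x, inv_letter x] = surf_class g []"
  using step_class[OF surf_step.cancel[of "[]" g "[]" x]] by simp

lemma relator_class: "surf_class g (surf_relator g) = surf_class g []"
  using step_class[OF surf_step.relator[of "[]" g "[]"]] by simp


lemma prod_list_upt: "prod_list (map f [m..<n]) = prod f {m..<n}"
  by (metis distinct_upt prod.distinct_set_conv_list set_upt)

lemma prod_relator: "prod_list (map (f :: letter \<Rightarrow> 'a::comm_monoid_mult) (surf_relator g))
   = (\<Prod>i<2*g. f (i, False) * f (i, True))"
proof (induction g)
  case 0 then show ?case by (simp add: surf_relator_def)
next
  case (Suc g)
  have r: "surf_relator (Suc g) = surf_relator g @ [(2*g, False), (2*g+1, False), (2*g, True), (2*g+1, True)]"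
    by (simp add: surf_relator_def)
  have e: "2 * Suc g = Suc (Suc (2*g))" by simp
  show ?case unfolding r e using Suc by (simp add: mult_ac)
qed

definition phi :: "nat \<Rightarrow> (letter list set \<Rightarrow> letter list set \<Rightarrow> complex) \<Rightarrow> letter \<Rightarrow> complex" where
  "phi g \<delta> l = (if snd l then inverse (\<delta> (surf_class g [(fst l, False)]) (surf_class g [(fst l, True)])) else 1)"

definition Fw :: "nat \<Rightarrow> (letter list set \<Rightarrow> letter list set \<Rightarrow> complex) \<Rightarrow> letter list \<Rightarrow> complex" where
  "Fw g \<delta> w = (\<Prod>k<length w. phi g \<delta> (w!k) * \<delta> (surf_class g (take k w)) (surf_class g [w!k]))"

lemma F_Nil[simp]: "Fw g \<delta> [] = 1" by (simp add: Fw_def)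

lemma F_snoc: "Fw g \<delta> (w @ [l]) = Fw g \<delta> w * phi g \<delta> l * \<delta> (surf_class g w) (surf_class g [l])"
  unfolding Fw_def by (simp add: nth_append)

lemma prod_drop0: fixes n :: nat assumes f0: "f 0 = (1::'a::comm_monoid_mult)" shows "(\<Prod>k<n. f k) = (\<Prod>k\<in>{1..<n}. f k)"
proof (cases n)
  case 0 then show ?thesis by simp
next
  case (Suc m)
  have "{..<n} = insert 0 {1..<n}" using Suc by auto
  then show ?thesis using f0 by simp
qed

locale cocyc =
  fixes g :: nat and \<delta> :: "letter list set \<Rightarrow> letter list set \<Rightarrow> complex"
  assumes nz: "w \<in> words g \<Longrightarrow> v \<in> words g \<Longrightarrow> \<delta> (surf_class g w) (surf_class g v) \<noteq> 0"
  and nr1: "w \<in> words g \<Longrightarrow> \<delta> (surf_class g w) (surf_class g []) = 1"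
  and nr2: "w \<in> words g \<Longrightarrow> \<delta> (surf_class g []) (surf_class g w) = 1"
  and coc: "w \<in> words g \<Longrightarrow> v \<in> words g \<Longrightarrow> u \<in> words g \<Longrightarrow>
     \<delta> (surf_class g v) (surf_class g u) * \<delta> (surf_class g w) (surf_class g (v @ u))
     = \<delta> (surf_class g (w @ v)) (surf_class g u) * \<delta> (surf_class g w) (surf_class g v)"
begin

lemma F_append: "w \<in> words g \<Longrightarrow> v \<in> words g \<Longrightarrow>
   Fw g \<delta> (w @ v) = Fw g \<delta> w * Fw g \<delta> v * \<delta> (surf_class g w) (surf_class g v)"
proof (induction v rule: rev_induct)
  case Nil then show ?case by (simp add: nr1)
next
  case (snoc l v)
  then have v: "v \<in> words g" and l: "[l] \<in> words g" by auto
  have "Fw g \<delta> (w @ v @ [l]) = Fw g \<delta> (w @ v) * phi g \<delta> l * \<delta> (surf_class g (w @ v)) (surf_class g [l])"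
    using F_snoc[of g \<delta> "w @ v" l] by simp
  also have "\<dots> = Fw g \<delta> w * Fw g \<delta> v * phi g \<delta> l *
     (\<delta> (surf_class g (w @ v)) (surf_class g [l]) * \<delta> (surf_class g w) (surf_class g v))"
    using snoc v by (simp add: mult_ac)
  also have "\<dots> = Fw g \<delta> w * Fw g \<delta> v * phi g \<delta> l *
     (\<delta> (surf_class g v) (surf_class g [l]) * \<delta> (surf_class g w) (surf_class g (v @ [l])))"
    using coc[OF snoc(2) v l] by simp
  also have "\<dots> = Fw g \<delta> w * Fw g \<delta> (v @ [l]) * \<delta> (surf_class g w) (surf_class g (v @ [l]))"
    by (simp add: F_snoc mult_ac)
  finally show ?case by simp
qed

lemma F_single: "fst x < 2*g \<Longrightarrow> Fw g \<delta> [x] = phi g \<delta> x"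
  using F_snoc[of g \<delta> "[]" x] nr2[of "[x]"] by simp

lemma F_pair: "fst x < 2*g \<Longrightarrow> Fw g \<delta> [x, y] = phi g \<delta> x * phi g \<delta> y * \<delta> (surf_class g [x]) (surf_class g [y])"
  using F_snoc[of g \<delta> "[x]" y] F_single[of x] by simp

lemma sym_inv: "i < 2*g \<Longrightarrow> \<delta> (surf_class g [(i, True)]) (surf_class g [(i, False)])
   = \<delta> (surf_class g [(i, False)]) (surf_class g [(i, True)])"
proof -
  assume i: "i < 2*g"
  have c1: "surf_class g [(i, True), (i, False)] = surf_class g []"
    using cancel_class[of "(i, True)" g] i by simp
  have c2: "surf_class g [(i, False), (i, True)] = surf_class g []"
    using cancel_class[of "(i, False)" g] i by simp
  have "\<delta> (surf_class g [(i, True)]) (surf_class g ([(i, True)] @ [(i, False)])) = 1"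
    using c1 nr1 i by simp
  note coc[of "[(i, False)]" "[(i, True)]" "[(i, False)]"]
  then show ?thesis using c1 c2 i nr1 nr2 by simp
qed

lemma F_cancel: "fst x < 2*g \<Longrightarrow> Fw g \<delta> [x, inv_letter x] = 1"
proof -
  assume x: "fst x < 2*g"
  obtain i b where xb: "x = (i, b)" by (cases x)
  show ?thesis
  proof (cases b)
    case True
    then show ?thesis using x xb F_pair[of x "inv_letter x"] sym_inv[of i] nz[of "[(i,False)]" "[(i,True)]"]
      by (simp add: phi_def)
  next
    case False
    then show ?thesis using x xb F_pair[of x "inv_letter x"] nz[of "[(i,False)]" "[(i,True)]"]
      by (simp add: phi_def)
  qed
qed

lemma F_ins: "m \<in> words g \<Longrightarrow> surf_class g m = surf_class g [] \<Longrightarrow> Fw g \<delta> m = 1 \<Longrightarrow>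
   u \<in> words g \<Longrightarrow> v \<in> words g \<Longrightarrow> Fw g \<delta> (u @ m @ v) = Fw g \<delta> (u @ v)"
proof -
  assume m: "m \<in> words g" "surf_class g m = surf_class g []" "Fw g \<delta> m = 1"
    and u: "u \<in> words g" and v: "v \<in> words g"
  have um: "surf_class g (u @ m) = surf_class g u"
    using mult_class[OF u m(1)] mult_class[OF u words_Nil] m(2) by simp
  have "Fw g \<delta> (u @ m @ v) = Fw g \<delta> (u @ m) * Fw g \<delta> v * \<delta> (surf_class g (u @ m)) (surf_class g v)"
    using F_append[of "u @ m" v] u m v by simp
  also have "Fw g \<delta> (u @ m) = Fw g \<delta> u"
    using F_append[OF u m(1)] m nr1[OF u] by simp
  finally show ?thesis using um F_append[OF u v] by simp
qed

lemma F_step: assumes R: "Fw g \<delta> (surf_relator g) = 1"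
  shows "(a, b) \<in> surf_step g \<Longrightarrow> Fw g \<delta> a = Fw g \<delta> b"
proof (induction rule: surf_step.induct)
  case (cancel u v x)
  then show ?case using F_ins[of "[x, inv_letter x]" u v] F_cancel cancel_class by simp
next
  case (relator u v)
  then show ?case using F_ins[of "surf_relator g" u v] R relator_class by simp
qed

lemma F_rel: assumes R: "Fw g \<delta> (surf_relator g) = 1"
  shows "(a, b) \<in> surf_rel g \<Longrightarrow> Fw g \<delta> a = Fw g \<delta> b"
proof -
  assume "(a, b) \<in> surf_rel g"
  then have "(a, b) \<in> (SS g)\<^sup>*" by (simp add: surf_rel_def)
  then show ?thesis
  proof (induction rule: rtrancl_induct)
    case base then show ?case by simp
  next
    case (step y z)
    then show ?case using F_step[OF R, of y z] F_step[OF R, of z y] by auto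
  qed
qed

lemma F_relator: "Fw g \<delta> (surf_relator g) = chain_pairing (surface_fundamental_cycle g) \<delta>"
proof -
  let ?r = "surf_relator g"
  let ?n = "length ?r"
  have rw: "?r \<in> words g" by simp
  have "Fw g \<delta> ?r = (\<Prod>k<?n. phi g \<delta> (?r!k)) * (\<Prod>k<?n. \<delta> (surf_class g (take k ?r)) (surf_class g [?r!k]))"
    unfolding Fw_def by (rule prod.distrib)
  also have "(\<Prod>k<?n. phi g \<delta> (?r!k)) = prod_list (map (phi g \<delta>) ?r)"
    by (simp add: prod.list_conv_set_nth atLeast0LessThan)
  also have "\<dots> = (\<Prod>i<2*g. inverse (\<delta> (surf_class g [(i, False)]) (surf_class g [(i, True)])))"
    by (simp add: prod_relator phi_def)
  also have "(\<Prod>k<?n. \<delta> (surf_class g (take k ?r)) (surf_class g [?r!k]))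
     = (\<Prod>k\<in>{1..<?n}. \<delta> (surf_class g (take k ?r)) (surf_class g [?r!k]))"
  proof (cases "?n = 0")
    case True then show ?thesis by simp
  next
    case False
    then have "[?r!0] \<in> words g" using rw unfolding words_def by (auto dest: nth_mem)
    then show ?thesis by (intro prod_drop0) (simp add: nr2)
  qed
  finally have "Fw g \<delta> ?r = (\<Prod>i<2*g. inverse (\<delta> (surf_class g [(i, False)]) (surf_class g [(i, True)])))
       * (\<Prod>k\<in>{1..<?n}. \<delta> (surf_class g (take k ?r)) (surf_class g [?r!k]))" .
  moreover have "chain_pairing (surface_fundamental_cycle g) \<delta>
     = (\<Prod>k\<in>{1..<?n}. \<delta> (surf_class g (take k ?r)) (surf_class g [?r!k]))
       * (\<Prod>i\<in>{0..<2*g}. inverse (\<delta> (surf_class g [(i, False)]) (surf_class g [(i, True)])))"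
    unfolding chain_pairing_def surface_fundamental_cycle_def Let_def
    by (simp add: prod_list_upt power_int_minus o_def)
  ultimately show ?thesis by (simp add: atLeast0LessThan mult.commute)
qed

end

lemma cp_mult: "(\<forall>(c, a, b)\<in>set \<Psi>. \<gamma>' a b = \<gamma> a b * \<delta> a b) \<Longrightarrow>
   chain_pairing \<Psi> \<gamma>' = chain_pairing \<Psi> \<gamma> * chain_pairing \<Psi> \<delta>"
  by (induction \<Psi>) (auto simp: chain_pairing_def power_int_mult_distrib mult_ac)

lemma cp_nz: "(\<forall>(c, a, b)\<in>set \<Psi>. \<gamma> a b \<noteq> 0) \<Longrightarrow> chain_pairing \<Psi> \<gamma> \<noteq> 0"
  by (induction \<Psi>) (auto simp: chain_pairing_def)

lemma cycle_entries: "(c, a, b) \<in> set (surface_fundamental_cycle g) \<Longrightarrow>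
   a \<in> carrier (surface_group g) \<and> b \<in> carrier (surface_group g)"
proof -
  assume "(c, a, b) \<in> set (surface_fundamental_cycle g)"
  then consider k where "k < length (surf_relator g)" "a = surf_class g (take k (surf_relator g))"
      "b = surf_class g [surf_relator g ! k]"
    | i where "i < 2*g" "a = surf_class g [(i, False)]" "b = surf_class g [(i, True)]"
    unfolding surface_fundamental_cycle_def Let_def by auto
  then show ?thesis
  proof cases
    case 1
    have r: "surf_relator g \<in> words g" by simp
    then have "take k (surf_relator g) \<in> words g" unfolding words_def by (auto dest: in_set_takeD)
    moreover have "[surf_relator g ! k] \<in> words g" using r 1 unfolding words_def by (auto dest: nth_mem)
    ultimately show ?thesis using 1 class_carrier by auto
  next
    case 2 then show ?thesis using class_carrier by auto
  qed
qed

lemma words_take: "w \<in> words g \<Longrightarrow> take k w \<in> words g"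
  unfolding words_def by (auto dest: in_set_takeD)

lemma words_nth: "w \<in> words g \<Longrightarrow> k < length w \<Longrightarrow> [w ! k] \<in> words g"
  unfolding words_def by (auto dest: nth_mem)

theorem mainTheorem3:
  fixes G :: "('g, 'b) monoid_scheme"
    and \<alpha> :: "'g \<Rightarrow> 'g \<Rightarrow> 'g \<Rightarrow> complex"
    and g :: nat
    and \<rho> :: "letter list set \<Rightarrow> 'g"
    and \<gamma> \<gamma>' :: "letter list set \<Rightarrow> letter list set \<Rightarrow> complex"
  assumes "group G" and "finite (carrier G)"
    and "normalized_3cocycle G \<alpha>"
    and "g \<ge> 1"
    and "\<rho> \<in> hom (surface_group g) G"
    and "weak_rep_lift (surface_group g) G \<alpha> \<rho> \<gamma>"
    and "weak_rep_lift (surface_group g) G \<alpha> \<rho> \<gamma>'"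
  shows "iso_over_identity (surface_group g) \<gamma> \<gamma>' \<longleftrightarrow>
         chain_pairing (surface_fundamental_cycle g) \<gamma>
           = chain_pairing (surface_fundamental_cycle g) \<gamma>'"
proof -
  let ?\<Gamma> = "surface_group g"
  let ?c = "surf_class g"
  let ?r = "surf_relator g"
  let ?\<Psi> = "surface_fundamental_cycle g"
  define \<delta> where "\<delta> a b = \<gamma>' a b / \<gamma> a b" for a b
  note W1 = assms(6)[unfolded weak_rep_lift_def]
  note W2 = assms(7)[unfolded weak_rep_lift_def]
  have m1: "cmod (\<gamma> a b) = 1" if "a \<in> carrier ?\<Gamma>" "b \<in> carrier ?\<Gamma>" for a b
    using W1 that by blast
  have m2: "cmod (\<gamma>' a b) = 1" if "a \<in> carrier ?\<Gamma>" "b \<in> carrier ?\<Gamma>" for a b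
    using W2 that by blast
  have nz1: "\<gamma> a b \<noteq> 0" if "a \<in> carrier ?\<Gamma>" "b \<in> carrier ?\<Gamma>" for a b
    using m1[OF that] by auto
  have nz2: "\<gamma>' a b \<noteq> 0" if "a \<in> carrier ?\<Gamma>" "b \<in> carrier ?\<Gamma>" for a b
    using m2[OF that] by auto
  have md: "cmod (\<delta> a b) = 1" if "a \<in> carrier ?\<Gamma>" "b \<in> carrier ?\<Gamma>" for a b
    using m1[OF that] m2[OF that] by (simp add: \<delta>_def norm_divide)
  have one_c: "?c [] \<in> carrier ?\<Gamma>" by (simp add: class_carrier)
  have n1: "\<gamma> a (?c []) = 1 \<and> \<gamma> (?c []) a = 1 \<and> \<gamma>' a (?c []) = 1 \<and> \<gamma>' (?c []) a = 1"
    if "a \<in> carrier ?\<Gamma>" for a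
    using W1 W2 that one_class[of g] by auto
  interpret cocyc g \<delta>
  proof
    fix w v u assume w: "w \<in> words g" and v: "v \<in> words g" and u: "u \<in> words g"
    show "\<delta> (?c w) (?c v) \<noteq> 0" using nz1 nz2 class_carrier w v by (simp add: \<delta>_def)
    show "\<delta> (?c w) (?c []) = 1" using n1 class_carrier w by (simp add: \<delta>_def)
    show "\<delta> (?c []) (?c w) = 1" using n1 class_carrier w by (simp add: \<delta>_def)
    have cw: "?c w \<in> carrier ?\<Gamma>" and cv: "?c v \<in> carrier ?\<Gamma>" and cu: "?c u \<in> carrier ?\<Gamma>"
      and cwv: "?c (w @ v) \<in> carrier ?\<Gamma>" and cvu: "?c (v @ u) \<in> carrier ?\<Gamma>"
      using w v u class_carrier by auto
    have e1: "\<gamma> (?c v) (?c u) * inverse (\<gamma> (?c (w @ v)) (?c u)) * \<gamma> (?c w) (?c (v @ u)) * inverse (\<gamma> (?c w) (?c v))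
      = \<alpha> (\<rho> (?c w)) (\<rho> (?c v)) (\<rho> (?c u))"
      using W1 cw cv cu mult_class[OF w v] mult_class[OF v u] by metis
    have e2: "\<gamma>' (?c v) (?c u) * inverse (\<gamma>' (?c (w @ v)) (?c u)) * \<gamma>' (?c w) (?c (v @ u)) * inverse (\<gamma>' (?c w) (?c v))
      = \<alpha> (\<rho> (?c w)) (\<rho> (?c v)) (\<rho> (?c u))"
      using W2 cw cv cu mult_class[OF w v] mult_class[OF v u] by metis
    have nzs: "\<gamma> (?c v) (?c u) \<noteq> 0" "\<gamma> (?c (w @ v)) (?c u) \<noteq> 0" "\<gamma> (?c w) (?c (v @ u)) \<noteq> 0"
      "\<gamma> (?c w) (?c v) \<noteq> 0"
      "\<gamma>' (?c v) (?c u) \<noteq> 0" "\<gamma>' (?c (w @ v)) (?c u) \<noteq> 0" "\<gamma>' (?c w) (?c (v @ u)) \<noteq> 0"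
      "\<gamma>' (?c w) (?c v) \<noteq> 0"
      using nz1 nz2 cw cv cu cwv cvu by auto
    from e1 e2 have "\<gamma> (?c v) (?c u) * inverse (\<gamma> (?c (w @ v)) (?c u)) * \<gamma> (?c w) (?c (v @ u)) * inverse (\<gamma> (?c w) (?c v))
      = \<gamma>' (?c v) (?c u) * inverse (\<gamma>' (?c (w @ v)) (?c u)) * \<gamma>' (?c w) (?c (v @ u)) * inverse (\<gamma>' (?c w) (?c v))"
      by simp
    then show "\<delta> (?c v) (?c u) * \<delta> (?c w) (?c (v @ u)) = \<delta> (?c (w @ v)) (?c u) * \<delta> (?c w) (?c v)"
      using nzs unfolding \<delta>_def by (simp add: field_simps)
  qed
  have P: "chain_pairing ?\<Psi> \<gamma>' = chain_pairing ?\<Psi> \<gamma> * Fw g \<delta> ?r"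
    unfolding F_relator
  proof (rule cp_mult, clarify)
    fix c a b assume "(c, a, b) \<in> set ?\<Psi>"
    then have "a \<in> carrier ?\<Gamma>" "b \<in> carrier ?\<Gamma>" using cycle_entries by auto
    then show "\<gamma>' a b = \<gamma> a b * \<delta> a b" using nz1 by (simp add: \<delta>_def)
  qed
  have Pnz: "chain_pairing ?\<Psi> \<gamma> \<noteq> 0"
    by (rule cp_nz) (use cycle_entries nz1 in blast)
  have "iso_over_identity ?\<Gamma> \<gamma> \<gamma>' \<longleftrightarrow> Fw g \<delta> ?r = 1"
  proof
    assume "iso_over_identity ?\<Gamma> \<gamma> \<gamma>'"
    then obtain \<eta> where e1: "\<And>a. a \<in> carrier ?\<Gamma> \<Longrightarrow> cmod (\<eta> a) = 1"
      and e2: "\<And>a b. a \<in> carrier ?\<Gamma> \<Longrightarrow> b \<in> carrier ?\<Gamma> \<Longrightarrow>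
         \<eta> (a \<otimes>\<^bsub>?\<Gamma>\<^esub> b) * \<gamma> a b = \<gamma>' a b * \<eta> a * \<eta> b"
      unfolding iso_over_identity_def by blast
    have enz: "\<eta> a \<noteq> 0" if "a \<in> carrier ?\<Gamma>" for a using e1[OF that] by auto
    have eone: "\<eta> (?c []) = 1"
    proof -
      have "\<eta> (?c []) * 1 = 1 * \<eta> (?c []) * \<eta> (?c [])"
        using e2[OF one_c one_c] n1[OF one_c] mult_class[OF words_Nil words_Nil] by simp
      then show ?thesis using enz[OF one_c] by simp
    qed
    have dform: "\<delta> (?c w) (?c v) = \<eta> (?c (w @ v)) / (\<eta> (?c w) * \<eta> (?c v))"
      if "w \<in> words g" "v \<in> words g" for w v
    proof -
      have cw: "?c w \<in> carrier ?\<Gamma>" and cv: "?c v \<in> carrier ?\<Gamma>" using that class_carrier by auto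
      have "\<eta> (?c (w @ v)) * \<gamma> (?c w) (?c v) = \<gamma>' (?c w) (?c v) * \<eta> (?c w) * \<eta> (?c v)"
        using e2[OF cw cv] mult_class[OF that] by simp
      then show ?thesis using nz1[OF cw cv] enz[OF cw] enz[OF cv] unfolding \<delta>_def
        by (simp add: field_simps)
    qed
    have Fform: "w \<in> words g \<Longrightarrow> Fw g \<delta> w = \<eta> (?c w) * prod_list (map (\<lambda>l. phi g \<delta> l / \<eta> (?c [l])) w)" for w
    proof (induction w rule: rev_induct)
      case Nil then show ?case using eone by simp
    next
      case (snoc l w)
      then have w: "w \<in> words g" and l: "[l] \<in> words g" by auto
      have "Fw g \<delta> (w @ [l]) = Fw g \<delta> w * phi g \<delta> l * (\<eta> (?c (w @ [l])) / (\<eta> (?c w) * \<eta> (?c [l])))"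
        using F_snoc[of g \<delta> w l] dform[OF w l] by simp
      then show ?case using snoc(1)[OF w] enz class_carrier w l by (simp add: field_simps)
    qed
    have "Fw g \<delta> ?r = \<eta> (?c ?r) * (\<Prod>i<2*g. phi g \<delta> (i, False) / \<eta> (?c [(i, False)]) * (phi g \<delta> (i, True) / \<eta> (?c [(i, True)])))"
      using Fform[of ?r] by (simp add: prod_relator)
    also have "\<dots> = 1"
    proof -
      have "phi g \<delta> (i, False) / \<eta> (?c [(i, False)]) * (phi g \<delta> (i, True) / \<eta> (?c [(i, True)])) = 1"
        if "i < 2*g" for i
      proof -
        have a: "[(i, False)] \<in> words g" "[(i, True)] \<in> words g" using that by auto
        have "?c ([(i, False)] @ [(i, True)]) = ?c []" using cancel_class[of "(i, False)" g] that by simp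
        then have "\<delta> (?c [(i, False)]) (?c [(i, True)]) = 1 / (\<eta> (?c [(i, False)]) * \<eta> (?c [(i, True)]))"
          using dform[OF a] eone by simp
        then show ?thesis using enz class_carrier a by (simp add: phi_def field_simps)
      qed
      then show ?thesis using relator_class[of g] eone by simp
    qed
    finally show "Fw g \<delta> ?r = 1" .
  next
    assume R: "Fw g \<delta> ?r = 1"
    define \<eta> where "\<eta> A = Fw g \<delta> (SOME w. w \<in> words g \<and> A = ?c w)" for A
    have eta: "\<eta> (?c w) = Fw g \<delta> w" if w: "w \<in> words g" for w
    proof -
      have "\<exists>w'. w' \<in> words g \<and> ?c w = ?c w'" using w by blast
      then have "(SOME w'. w' \<in> words g \<and> ?c w = ?c w') \<in> words g \<and>
         ?c w = ?c (SOME w'. w' \<in> words g \<and> ?c w = ?c w')" by (rule someI_ex)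
      then show ?thesis unfolding \<eta>_def using F_rel[OF R] class_eq_iff w by metis
    qed
    have Fm: "cmod (Fw g \<delta> w) = 1" if w: "w \<in> words g" for w
    proof -
      have "cmod (Fw g \<delta> w) = (\<Prod>k<length w. cmod (phi g \<delta> (w!k) * \<delta> (?c (take k w)) (?c [w!k])))"
        unfolding Fw_def by (simp add: prod_norm)
      also have "\<dots> = (\<Prod>k<length w. 1)"
      proof (rule prod.cong)
        fix k assume "k \<in> {..<length w}"
        then have a: "?c (take k w) \<in> carrier ?\<Gamma>" "?c [w!k] \<in> carrier ?\<Gamma>"
          using words_take[OF w] words_nth[OF w] class_carrier by auto
        have "cmod (phi g \<delta> (w!k)) = 1"
        proof -
          have "fst (w!k) < 2*g" using words_nth[OF w] \<open>k \<in> {..<length w}\<close> by simp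
          then show ?thesis using md class_carrier by (simp add: phi_def norm_inverse)
        qed
        then show "cmod (phi g \<delta> (w!k) * \<delta> (?c (take k w)) (?c [w!k])) = 1"
          using md[OF a] by (simp add: norm_mult)
      qed simp
      finally show ?thesis by simp
    qed
    show "iso_over_identity ?\<Gamma> \<gamma> \<gamma>'"
      unfolding iso_over_identity_def
    proof (intro exI[of _ \<eta>] conjI ballI)
      fix a assume "a \<in> carrier ?\<Gamma>"
      then obtain w where "w \<in> words g" "a = ?c w" using carrier_class by blast
      then show "cmod (\<eta> a) = 1" using eta Fm by simp
    next
      fix a b assume "a \<in> carrier ?\<Gamma>" "b \<in> carrier ?\<Gamma>"
      then obtain w v where w: "w \<in> words g" "a = ?c w" and v: "v \<in> words g" "b = ?c v"
        using carrier_class by metis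
      have "\<eta> (a \<otimes>\<^bsub>?\<Gamma>\<^esub> b) = Fw g \<delta> w * Fw g \<delta> v * \<delta> a b"
        using w v mult_class[of w g v] eta F_append by simp
      then show "\<eta> (a \<otimes>\<^bsub>?\<Gamma>\<^esub> b) * \<gamma> a b = \<gamma>' a b * \<eta> a * \<eta> b"
        using w v eta nz1 class_carrier by (simp add: \<delta>_def field_simps)
    qed
  qed
  then show ?thesis using P Pnz by auto
qed

end
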